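(* Let $\rho$ be a (complex) measure on the unit circle $S^1$, fix parameters $t=(t_i)_{i\ge1}$, $s=(s_i)_{i\ge1}$, and consider the bilinear form $\langle f,g\rangle=\oint_{S^1}\frac{\rho(dz)}{2\pi i z}f(z)g(z^{-1})e^{\sum_{i\ge1}(t_iz^i-s_iz^{-i})}$ on polynomials. Assume $\tau_n=\det(\langle z^k,z^\ell\rangle)_{0\le k,\ell\le n-1}\neq0$ for all $n\ge1$ ($\tau_0=1$), put $h_n=\tau_{n+1}/\tau_n$, and let $p^{(1)}_n,p^{(2)}_n$ ($n\ge0$) be the unique monic polynomials of degree $n$ with $\langle p^{(1)}_n,p^{(2)}_m\rangle=\delta_{nm}h_n$. Let $L_1$ and $M_2$ be the semi-infinite matrices (indices from $0$) defined by $zp^{(1)}_n(z)=\sum_m (L_1)_{n,m}p^{(1)}_m(z)$ and $zp^{(2)}_n(z)=\sum_m(M_2)_{n,m}p^{(2)}_m(z)$. Then for all $n\ge0$: $(L_1)_{n,n+1}=(M_2)_{n,n+1}=1$, $(L_1)_{n,m}=(M_2)_{n,m}=0$ for $m\ge n+2$, and for $0\le m\le n$, $$(L_1)_{n,m}=-\,h_n\,p^{(1)}_{n+1}(0)\,h_m^{-1}\,p^{(2)}_m(0),\qquad (M_2)_{n,m}=-\,h_n\,p^{(2)}_{n+1}(0)\,h_m^{-1}\,p^{(1)}_m(0).$$ Equivalently, $L_1=-\big(h\,p^{(1)}_\Lambda(0)\otimes h^{-1}p^{(2)}(0)\big)_{-0}+\Lambda$ and $M_2=-\big(h\,p^{(2)}_\Lambda(0)\otimes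 h^{-1}p^{(1)}(0)\big)_{-0}+\Lambda$.
   Context: $h=\operatorname{diag}(h_0,h_1,\dots)$; $p^{(i)}(0)=(p^{(i)}_0(0),p^{(i)}_1(0),\dots)$, $p^{(i)}_\Lambda(0)=(p^{(i)}_1(0),p^{(i)}_2(0),\dots)$; $u\otimes v$ is the matrix $(u_nv_m)$; $B_{-0}$ denotes the lower-triangular part of $B$ including the diagonal; $\Lambda$ is the shift matrix $\Lambda_{ij}=\delta_{j-i,1}$. (In the 2-Toda notation of the paper, $M_2=hL_2^{\top}h^{-1}$.) *)

theory Defs
  imports "HOL-Analysis.Analysis" "HOL-Computational_Algebra.Polynomial"
    "Jordan_Normal_Form.Determinant"
begin

definition toda_weight :: "(nat \<Rightarrow> complex) \<Rightarrow> (nat \<Rightarrow> complex) \<Rightarrow> complex \<Rightarrow> complex" where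
  "toda_weight t s z =
     exp (\<Sum>i. t (Suc i) * z ^ Suc i - s (Suc i) * inverse z ^ Suc i)"

text \<open>The complex measure rho is represented as w dM, with M a finite positive
  measure on the unit circle and w an M-integrable complex density.\<close>
definition bilin :: "complex measure \<Rightarrow> (complex \<Rightarrow> complex) \<Rightarrow> (nat \<Rightarrow> complex) \<Rightarrow>
    (nat \<Rightarrow> complex) \<Rightarrow> complex poly \<Rightarrow> complex poly \<Rightarrow> complex" where
  "bilin M w t s f g =
     integral\<^sup>L M (\<lambda>z. w z / (2 * complex_of_real pi * \<i> * z) * poly f z
                       * poly g (inverse z) * toda_weight t s z)"

definition tau :: "complex measure \<Rightarrow> (complex \<Rightarrow> complex) \<Rightarrow> (nat \<Rightarrow> complex) \<Rightarrow>
    (nat \<Rightarrow> complex) \<Rightarrow> nat \<Rightarrow> complex" where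
  "tau M w t s n = Determinant.det (Matrix.mat n n (\<lambda>(k, l). bilin M w t s (monom 1 k) (monom 1 l)))"

definition hcoef :: "complex measure \<Rightarrow> (complex \<Rightarrow> complex) \<Rightarrow> (nat \<Rightarrow> complex) \<Rightarrow>
    (nat \<Rightarrow> complex) \<Rightarrow> nat \<Rightarrow> complex" where
  "hcoef M w t s n = tau M w t s (Suc n) / tau M w t s n"

end

theory Submission
  imports Defs
begin

lemma deg_lt_or_zero:
  fixes p :: "'a::zero poly"
  assumes "degree p \<le> n" "coeff p n = 0"
  shows "p = 0 \<or> degree p < n"
proof (cases "p = 0")
  case False
  then have "degree p \<noteq> n" using assms(2) leading_coeff_0_iff by metis
  then show ?thesis using assms(1) by simp
qed simp

locale bf =
  fixes B :: "complex poly \<Rightarrow> complex poly \<Rightarrow> complex"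
    and p1 p2 :: "nat \<Rightarrow> complex poly" and h :: "nat \<Rightarrow> complex"
  assumes addL: "\<And>f g k. B (f + g) k = B f k + B g k"
    and smL: "\<And>c f k. B (Polynomial.smult c f) k = c * B f k"
    and addR: "\<And>f g k. B k (f + g) = B k f + B k g"
    and smR: "\<And>c f k. B k (Polynomial.smult c f) = c * B k f"
    and ptw: "\<And>f g f' g'. (\<And>z. z \<noteq> 0 \<Longrightarrow> poly f z * poly g (inverse z) = poly f' z * poly g' (inverse z))
               \<Longrightarrow> B f g = B f' g'"
    and hnz: "\<And>n. h n \<noteq> 0"
    and p1_deg: "\<And>n. degree (p1 n) = n" and p1_monic: "\<And>n. lead_coeff (p1 n) = 1"
    and p2_deg: "\<And>n. degree (p2 n) = n" and p2_monic: "\<And>n. lead_coeff (p2 n) = 1"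
    and orth: "\<And>n m. B (p1 n) (p2 m) = (if n = m then h n else 0)"
begin

lemma zeroL: "B 0 k = 0"
  using smL[of 0 0 k] by simp
lemma zeroR: "B k 0 = 0"
  using smR[where c=0 and f=0 and k=k] by simp
lemma diffL: "B (f - g) k = B f k - B g k"
  using addL[of "f - g" g k] by simp
lemma diffR: "B k (f - g) = B k f - B k g"
  using addR[of k "f - g" g] by simp
lemma sumL: "finite S \<Longrightarrow> B (sum F S) k = (\<Sum>i\<in>S. B (F i) k)"
  by (induction S rule: finite_induct) (simp_all add: zeroL addL)
lemma sumR: "finite S \<Longrightarrow> B k (sum F S) = (\<Sum>i\<in>S. B k (F i))"
  by (induction S rule: finite_induct) (simp_all add: zeroR addR)

lemma coeff1_p1: "coeff (p1 n) n = 1" using p1_monic p1_deg by metis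
lemma coeff1_p2: "coeff (p2 n) n = 1" using p2_monic p2_deg by metis

lemma orthL: "degree q < m \<or> q = 0 \<Longrightarrow> B (p1 m) q = 0"
proof -
  have main: "\<forall>q. degree q \<le> d \<longrightarrow> d < m \<longrightarrow> B (p1 m) q = 0" for d
  proof (induction d)
    case (0)
    show ?case
    proof (intro allI impI)
      fix q :: "complex poly" assume a: "degree q \<le> 0" "0 < m"
      define r where "r = q - Polynomial.smult (coeff q 0) (p2 0)"
      have "degree r \<le> 0" unfolding r_def using a p2_deg
        by (metis degree_diff_le degree_smult_le le_zero_eq)
      moreover have "coeff r 0 = 0" unfolding r_def using coeff1_p2[of 0] by simp
      ultimately have "r = 0" using deg_lt_or_zero by blast
      then have "q = Polynomial.smult (coeff q 0) (p2 0)" unfolding r_def by simp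
      then have "B (p1 m) q = B (p1 m) (Polynomial.smult (coeff q 0) (p2 0))" by simp
      also have "\<dots> = coeff q 0 * B (p1 m) (p2 0)" by (rule smR)
      finally show "B (p1 m) q = 0" using a orth[of m 0] by simp
    qed
  next
    case (Suc d)
    show ?case
    proof (intro allI impI)
      fix q :: "complex poly" assume a: "degree q \<le> Suc d" "Suc d < m"
      define r where "r = q - Polynomial.smult (coeff q (Suc d)) (p2 (Suc d))"
      have "degree r \<le> Suc d" unfolding r_def using a p2_deg
        by (metis degree_diff_le degree_smult_le order_trans)
      moreover have "coeff r (Suc d) = 0" unfolding r_def using coeff1_p2[of "Suc d"] by simp
      ultimately have "r = 0 \<or> degree r \<le> d" using deg_lt_or_zero by fastforce
      then have "B (p1 m) r = 0" using Suc.IH a zeroR by auto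
      moreover have "q = r + Polynomial.smult (coeff q (Suc d)) (p2 (Suc d))" unfolding r_def by simp
      ultimately have "B (p1 m) q = B (p1 m) (r + Polynomial.smult (coeff q (Suc d)) (p2 (Suc d)))" by simp
      also have "\<dots> = B (p1 m) r + coeff q (Suc d) * B (p1 m) (p2 (Suc d))" by (simp add: addR smR)
      finally show "B (p1 m) q = 0" using a orth[of m "Suc d"] \<open>B (p1 m) r = 0\<close> by simp
    qed
  qed
  assume "degree q < m \<or> q = 0"
  then show ?thesis
  proof
    assume "degree q < m" then show ?thesis using main[of "degree q"] by simp
  qed (simp add: zeroR)
qed

lemma swap: "bf (\<lambda>f g. B g f) p2 p1 h"
proof
  fix f g f' g' :: "complex poly"
  assume H: "\<And>z. z \<noteq> 0 \<Longrightarrow> poly f z * poly g (inverse z) = poly f' z * poly g' (inverse z)"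
  show "B g f = B g' f'"
  proof (rule ptw)
    fix z :: complex assume "z \<noteq> 0"
    then have "inverse z \<noteq> 0" by simp
    from H[OF this] show "poly g z * poly f (inverse z) = poly g' z * poly f' (inverse z)"
      by (simp add: mult.commute)
  qed
qed (auto simp: addL smL addR smR hnz p1_deg p1_monic p2_deg p2_monic orth coeff1_p1 coeff1_p2)

lemma orthR: "degree q < m \<or> q = 0 \<Longrightarrow> B q (p2 m) = 0"
  using bf.orthL[OF swap] by blast

lemma nondegL:
  assumes q: "degree q < n \<or> q = 0" and o: "\<And>j. j < n \<Longrightarrow> B q (monom 1 j) = 0"
  shows "q = 0"
proof (rule ccontr)
  assume nz: "q \<noteq> 0"
  have all: "B q g = 0" if "degree g < n" for g
  proof -
    have "B q g = B q (\<Sum>i\<le>degree g. Polynomial.smult (coeff g i) (monom 1 i))"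
      by (metis (no_types, lifting) poly_as_sum_of_monoms smult_monom mult.right_neutral sum.cong)
    also have "\<dots> = (\<Sum>i\<le>degree g. coeff g i * B q (monom 1 i))"
      by (simp add: sumR smR)
    also have "\<dots> = 0" using o that by (intro sum.neutral) auto
    finally show ?thesis .
  qed
  define d where "d = degree q"
  have dn: "d < n" using q nz d_def by auto
  define r where "r = q - Polynomial.smult (lead_coeff q) (p1 d)"
  have "degree r \<le> d" unfolding r_def d_def using p1_deg
    by (metis degree_diff_le degree_smult_le order_refl)
  moreover have "coeff r d = 0" unfolding r_def d_def using coeff1_p1[of "degree q"] by simp
  ultimately have "r = 0 \<or> degree r < d" using deg_lt_or_zero by blast
  then have "B r (p2 d) = 0" using orthR by blast
  moreover have "q = r + Polynomial.smult (lead_coeff q) (p1 d)" unfolding r_def by simp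
  ultimately have "B q (p2 d) = B (r + Polynomial.smult (lead_coeff q) (p1 d)) (p2 d)" by simp
  also have "\<dots> = B r (p2 d) + lead_coeff q * B (p1 d) (p2 d)" by (simp add: addL smL)
  finally have "B q (p2 d) = lead_coeff q * h d" using orth[of d d] \<open>B r (p2 d) = 0\<close> by simp
  moreover have "B q (p2 d) = 0" using all[of "p2 d"] p2_deg dn by simp
  ultimately show False using nz hnz by simp
qed

lemma p1_nz: "p1 n \<noteq> 0" using p1_monic[of n] by auto

lemma Lresult:
  fixes L :: "nat \<Rightarrow> nat \<Rightarrow> complex"
  assumes Lfin: "\<And>n. finite {m. L n m \<noteq> 0}"
    and Ldef: "\<And>n. [:0, 1:] * p1 n = (\<Sum>m | L n m \<noteq> 0. Polynomial.smult (L n m) (p1 m))"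
  shows "L n (Suc n) = 1 \<and> (\<forall>m. m \<ge> n + 2 \<longrightarrow> L n m = 0)
     \<and> (\<forall>m \<le> n. L n m = - h n * poly (p1 (Suc n)) 0 * inverse (h m) * poly (p2 m) 0)"
proof -
  define X where "X = pCons 0 (p1 n)"
  have X: "[:0,1:] * p1 n = X" by (simp add: X_def)
  have Lc: "L n k * h k = B X (p2 k)" for k
  proof -
    let ?S = "{m. L n m \<noteq> 0}"
    have "B X (p2 k) = B (\<Sum>m\<in>?S. Polynomial.smult (L n m) (p1 m)) (p2 k)"
      using Ldef[of n] X by simp
    also have "\<dots> = (\<Sum>m\<in>?S. L n m * B (p1 m) (p2 k))"
      by (simp add: sumL[OF Lfin] smL)
    also have "\<dots> = (\<Sum>m\<in>?S. if m = k then L n m * h k else 0)"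
      by (intro sum.cong) (auto simp: orth)
    also have "\<dots> = (if k \<in> ?S then L n k * h k else 0)"
      by (rule sum.delta[OF Lfin])
    also have "\<dots> = L n k * h k" by auto
    finally show ?thesis by simp
  qed
  have Lk: "L n k = B X (p2 k) / h k" for k
    using Lc[of k] hnz[of k] by (simp add: eq_divide_eq)
  have degX: "degree X = Suc n" unfolding X_def using p1_nz p1_deg by simp
  have part1: "\<forall>m. m \<ge> n + 2 \<longrightarrow> L n m = 0"
  proof (intro allI impI)
    fix m assume "m \<ge> n + 2"
    then have "B X (p2 m) = 0" using orthR degX by simp
    then show "L n m = 0" using Lk by simp
  qed
  define r where "r = p1 (Suc n) - X"
  have Xr: "X = p1 (Suc n) - r" unfolding r_def by simp
  have "degree r \<le> Suc n" unfolding r_def using degX p1_deg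
    by (intro degree_diff_le) simp_all
  moreover have "coeff r (Suc n) = 0" unfolding r_def X_def using coeff1_p1[of "Suc n"] coeff1_p1[of n] by simp
  ultimately have r0: "r = 0 \<or> degree r < Suc n" using deg_lt_or_zero by blast
  have part2: "L n (Suc n) = 1"
  proof -
    have "B X (p2 (Suc n)) = B (p1 (Suc n)) (p2 (Suc n)) - B r (p2 (Suc n))"
      unfolding Xr by (rule diffL)
    also have "\<dots> = h (Suc n)" using orthR[of r "Suc n"] r0 orth by auto
    finally show ?thesis using Lk hnz by simp
  qed
  define f where "f = reflect_poly (p2 n)"
  have fpt: "poly f z = z ^ n * poly (p2 n) (inverse z)" if "z \<noteq> 0" for z
    unfolding f_def using poly_reflect_poly_nz[OF that] p2_deg by simp
  have fA: "B f (monom 1 k) = 0" if "1 \<le> k" "k \<le> n" for k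
  proof -
    have "B f (monom 1 k) = B (monom 1 (n - k)) (p2 n)"
    proof (rule ptw)
      fix z :: complex assume z: "z \<noteq> 0"
      have e: "z ^ n = z ^ (n - k) * z ^ k" using that by (simp flip: power_add)
      have "z ^ k * inverse z ^ k = 1" using z by (simp add: power_mult_distrib[symmetric])
      then show "poly f z * poly (monom 1 k) (inverse z) = poly (monom 1 (n - k)) z * poly (p2 n) (inverse z)"
        using fpt[OF z] e by (simp add: poly_monom mult_ac)
    qed
    also have "\<dots> = 0" using orthR that by (simp add: degree_monom_eq)
    finally show ?thesis .
  qed
  have fB: "B f 1 = h n"
  proof -
    have "B f 1 = B (monom 1 n) (p2 n)"
      by (rule ptw) (simp add: fpt poly_monom)
    also have "\<dots> = B (p1 n) (p2 n) - B (p1 n - monom 1 n) (p2 n)"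
      using diffL[of "p1 n" "p1 n - monom 1 n" "p2 n"] by simp
    also have "B (p1 n - monom 1 n) (p2 n) = 0"
    proof (rule orthR)
      have "degree (p1 n - monom 1 n) \<le> n" using p1_deg
        by (intro degree_diff_le) (simp_all add: degree_monom_le)
      moreover have "coeff (p1 n - monom 1 n) n = 0" using coeff1_p1[of n] by simp
      ultimately show "degree (p1 n - monom 1 n) < n \<or> p1 n - monom 1 n = 0"
        using deg_lt_or_zero by blast
    qed
    finally show ?thesis using orth by simp
  qed
  have rA: "B r (monom 1 k) = 0" if "1 \<le> k" "k \<le> n" for k
  proof -
    have "B X (monom 1 k) = B (p1 n) (monom 1 (k - 1))"
    proof (rule ptw)
      fix z :: complex assume z: "z \<noteq> 0"
      have e: "k = Suc (k - 1)" using that by simp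
      have "inverse z ^ k = inverse z * inverse z ^ (k - 1)" by (subst e) simp
      then show "poly X z * poly (monom 1 k) (inverse z) = poly (p1 n) z * poly (monom 1 (k - 1)) (inverse z)"
        using z by (simp add: X_def poly_monom)
    qed
    also have "\<dots> = 0" using orthL that by (simp add: degree_monom_eq)
    finally have "B X (monom 1 k) = 0" .
    moreover have "B (p1 (Suc n)) (monom 1 k) = 0" using orthL that by (simp add: degree_monom_eq)
    ultimately show ?thesis unfolding r_def by (simp add: diffL)
  qed
  define g where "g = r - Polynomial.smult (poly r 0) f"
  have g0: "poly g 0 = 0" unfolding g_def f_def using p2_monic by simp
  have "degree r \<le> n" using r0 by auto
  moreover have "degree f \<le> n" unfolding f_def using degree_reflect_poly_le p2_deg by metis
  ultimately have dg: "degree g \<le> n" unfolding g_def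
    by (metis degree_diff_le degree_smult_le order_trans)
  obtain a q' where gq: "g = pCons a q'" by (rule pCons_cases)
  have a0: "a = 0" using g0 gq by simp
  have "q' = 0"
  proof (rule nondegL)
    show "degree q' < n \<or> q' = 0" using dg gq a0
      by (cases "q' = 0") auto
    fix j assume j: "j < n"
    have "B q' (monom 1 j) = B g (monom 1 (Suc j))"
    proof (rule ptw)
      fix z :: complex assume z: "z \<noteq> 0"
      show "poly q' z * poly (monom 1 j) (inverse z) = poly g z * poly (monom 1 (Suc j)) (inverse z)"
        using z by (simp add: gq a0 poly_monom)
    qed
    also have "\<dots> = B r (monom 1 (Suc j)) - poly r 0 * B f (monom 1 (Suc j))"
      unfolding g_def by (simp add: diffL smL)
    also have "\<dots> = 0" using fA rA j by simp
    finally show "B q' (monom 1 j) = 0" .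
  qed
  then have "g = 0" using gq a0 by simp
  then have "r = Polynomial.smult (poly r 0) f" unfolding g_def by simp
  then have Br1: "B r 1 = poly r 0 * h n" using fB smL by metis
  have pr0: "poly r 0 = poly (p1 (Suc n)) 0" unfolding r_def X_def by simp
  have BX1: "B X 1 = - (h n * poly (p1 (Suc n)) 0)"
  proof -
    have "B X 1 = B (p1 (Suc n)) 1 - B r 1" unfolding Xr by (rule diffL)
    moreover have "B (p1 (Suc n)) 1 = 0" using orthL by simp
    ultimately show ?thesis using Br1 pr0 by (simp add: mult.commute)
  qed
  have part3: "\<forall>m \<le> n. L n m = - h n * poly (p1 (Suc n)) 0 * inverse (h m) * poly (p2 m) 0"
  proof (intro allI impI)
    fix k assume k: "k \<le> n"
    obtain a q where pq: "p2 k = pCons a q" by (rule pCons_cases)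
    have a: "a = poly (p2 k) 0" using pq by simp
    have e: "p2 k = Polynomial.smult a 1 + pCons 0 q" using pq by simp
    have "B X (p2 k) = B X (Polynomial.smult a 1) + B X (pCons 0 q)"
      unfolding e by (rule addR)
    then have "B X (p2 k) = a * B X 1 + B X (pCons 0 q)" by (simp only: smR)
    moreover have "B X (pCons 0 q) = B (p1 n) q"
      by (rule ptw) (simp add: X_def)
    moreover have "B (p1 n) q = 0"
    proof (rule orthL)
      show "degree q < n \<or> q = 0"
      proof (cases "q = 0")
        case False
        then have "degree (p2 k) = Suc (degree q)" using pq by simp
        then show ?thesis using p2_deg k by simp
      qed simp
    qed
    ultimately have "B X (p2 k) = - (a * (h n * poly (p1 (Suc n)) 0))" using BX1 by simp
    then show "L n k = - h n * poly (p1 (Suc n)) 0 * inverse (h k) * poly (p2 k) 0"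
      using Lk[of k] a by (simp add: divide_inverse mult_ac)
  qed
  show ?thesis using part1 part2 part3 by blast
qed

end

lemma tau0: "tau M w t s 0 = 1" unfolding tau_def by (simp add: Determinant.det_def)

lemma bilin_integrable:
  fixes M :: "complex measure" and w :: "complex \<Rightarrow> complex" and t s :: "nat \<Rightarrow> complex"
  assumes space: "space M = sphere 0 1"
    and sets: "sets M = sets (restrict_space borel (sphere (0::complex) 1))"
    and int: "integrable M (\<lambda>z. w z * toda_weight t s z)"
  shows "integrable M (\<lambda>z. w z / (2 * complex_of_real pi * \<i> * z) * poly f z
                       * poly g (inverse z) * toda_weight t s z)"
proof -
  define c where "c = (\<lambda>z::complex. inverse (2 * complex_of_real pi * \<i> * z) * poly f z * poly g (inverse z))"
  have cb: "c \<in> borel_measurable borel"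
  proof -
    have P: "\<And>p::complex poly. poly p \<in> borel_measurable borel"
      by (intro borel_measurable_continuous_onI continuous_on_poly continuous_on_id)
    have I: "(\<lambda>z::complex. inverse z) \<in> borel_measurable borel"
      by (rule borel_measurable_inverse[OF measurable_ident_sets]) simp
    have I2: "(\<lambda>z::complex. inverse (2 * complex_of_real pi * \<i> * z)) \<in> borel_measurable borel"
      by (intro borel_measurable_inverse borel_measurable_times borel_measurable_const measurable_ident_sets) simp
    have G: "(\<lambda>z::complex. poly g (inverse z)) \<in> borel_measurable borel"
      using measurable_compose[OF I P] by (simp add: comp_def)
    show ?thesis unfolding c_def
      by (intro borel_measurable_times I2 G P)
  qed
  have cM: "c \<in> borel_measurable M"
    unfolding measurable_cong_sets[OF sets refl] by (rule measurable_restrict_space1[OF cb])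
  have "continuous_on (sphere 0 1) c"
    unfolding c_def by (intro continuous_intros) auto
  then have "compact (c ` sphere 0 1)" by (intro compact_continuous_image) auto
  then obtain K where K0: "\<forall>x\<in>c ` sphere 0 1. norm x \<le> K"
    using compact_imp_bounded bounded_iff by blast
  then have K: "\<And>z. z \<in> sphere 0 1 \<Longrightarrow> norm (c z) \<le> K" by blast
  have i2: "integrable M (\<lambda>z. K * (w z * toda_weight t s z))"
    using int by (intro integrable_mult_right)
  have "integrable M (\<lambda>z. (w z * toda_weight t s z) * c z)"
  proof (rule Bochner_Integration.integrable_bound[OF i2])
    show "(\<lambda>z. (w z * toda_weight t s z) * c z) \<in> borel_measurable M"
      by (intro borel_measurable_times borel_measurable_integrable int cM)
    show "AE x in M. norm (w x * toda_weight t s x * c x) \<le> norm (K * (w x * toda_weight t s x))"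
    proof (rule AE_I2)
      fix x assume "x \<in> space M"
      then have "norm (c x) \<le> K" using K space by auto
      then have "norm (c x) * norm (w x * toda_weight t s x) \<le> K * norm (w x * toda_weight t s x)"
        by (intro mult_right_mono) auto
      moreover have "K \<ge> 0" using \<open>norm (c x) \<le> K\<close> norm_ge_zero order_trans by blast
      ultimately show "norm (w x * toda_weight t s x * c x) \<le> norm (K * (w x * toda_weight t s x))"
        by (simp add: norm_mult mult.commute abs_of_nonneg)
    qed
  qed
  note i = this
  have eq: "(\<lambda>z. w z / (2 * complex_of_real pi * \<i> * z) * poly f z
                       * poly g (inverse z) * toda_weight t s z) = (\<lambda>z. (w z * toda_weight t s z) * c z)"
    unfolding c_def by (rule ext) (simp only: divide_inverse mult.assoc mult.commute mult.left_commute)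
  show ?thesis unfolding eq by (rule i)
qed

theorem theorem2p7:
  fixes M :: "complex measure" and w :: "complex \<Rightarrow> complex"
    and t s :: "nat \<Rightarrow> complex"
    and p1 p2 :: "nat \<Rightarrow> complex poly"
    and L1 M2 :: "nat \<Rightarrow> nat \<Rightarrow> complex"
  assumes space: "space M = sphere 0 1"
    and sets: "sets M = sets (restrict_space borel (sphere (0::complex) 1))"
    and fin: "finite_measure M"
    and w_int: "integrable M w"
    and conv: "\<And>z. z \<in> sphere 0 1 \<Longrightarrow>
         summable (\<lambda>i. t (Suc i) * z ^ Suc i - s (Suc i) * inverse z ^ Suc i)"
    and int: "integrable M (\<lambda>z. w z * toda_weight t s z)"
    and tau_nz: "\<And>n. n \<ge> 1 \<Longrightarrow> tau M w t s n \<noteq> 0"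
    and p1_deg: "\<And>n. degree (p1 n) = n" and p1_monic: "\<And>n. lead_coeff (p1 n) = 1"
    and p2_deg: "\<And>n. degree (p2 n) = n" and p2_monic: "\<And>n. lead_coeff (p2 n) = 1"
    and orth: "\<And>n m. bilin M w t s (p1 n) (p2 m) = (if n = m then hcoef M w t s n else 0)"
    and L1_fin: "\<And>n. finite {m. L1 n m \<noteq> 0}"
    and L1_def: "\<And>n. [:0, 1:] * p1 n = (\<Sum>m | L1 n m \<noteq> 0. Polynomial.smult (L1 n m) (p1 m))"
    and M2_fin: "\<And>n. finite {m. M2 n m \<noteq> 0}"
    and M2_def: "\<And>n. [:0, 1:] * p2 n = (\<Sum>m | M2 n m \<noteq> 0. Polynomial.smult (M2 n m) (p2 m))"
  shows "\<forall>n. L1 n (Suc n) = 1 \<and> M2 n (Suc n) = 1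
           \<and> (\<forall>m. m \<ge> n + 2 \<longrightarrow> L1 n m = 0 \<and> M2 n m = 0)
           \<and> (\<forall>m \<le> n.
                L1 n m = - hcoef M w t s n * poly (p1 (Suc n)) 0
                           * inverse (hcoef M w t s m) * poly (p2 m) 0
              \<and> M2 n m = - hcoef M w t s n * poly (p2 (Suc n)) 0
                           * inverse (hcoef M w t s m) * poly (p1 m) 0)"
proof -
  let ?h = "hcoef M w t s"
  have hnz: "?h n \<noteq> 0" for n
  proof -
    have "tau M w t s n \<noteq> 0" using tau_nz[of n] tau0[of M w t s] by (cases n) auto
    moreover have "tau M w t s (Suc n) \<noteq> 0" using tau_nz by simp
    ultimately show ?thesis unfolding hcoef_def by simp
  qed
  define W where "W = (\<lambda>z. w z / (2 * complex_of_real pi * \<i> * z) * toda_weight t s z)"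
  have bl: "bilin M w t s f g = integral\<^sup>L M (\<lambda>z. W z * (poly f z * poly g (inverse z)))" for f g
    unfolding bilin_def W_def by (simp only: mult_ac)
  have IW: "integrable M (\<lambda>z. W z * (poly f z * poly g (inverse z)))" for f g
  proof -
    have "(\<lambda>z. W z * (poly f z * poly g (inverse z))) = (\<lambda>z. w z / (2 * complex_of_real pi * \<i> * z) * poly f z
                       * poly g (inverse z) * toda_weight t s z)"
      unfolding W_def by (simp only: mult_ac)
    then show ?thesis using bilin_integrable[OF space sets int, of f g] by (simp only:)
  qed
  have c1: "\<And>n. coeff (p1 n) n = 1" using p1_monic p1_deg by metis
  have c2: "\<And>n. coeff (p2 n) n = 1" using p2_monic p2_deg by metis
  interpret bf "bilin M w t s" p1 p2 ?h
  proof
    fix f g k :: "complex poly"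
    have "(\<lambda>z. W z * (poly (f + g) z * poly k (inverse z))) =
          (\<lambda>z. W z * (poly f z * poly k (inverse z)) + W z * (poly g z * poly k (inverse z)))"
      by (rule ext) (simp add: algebra_simps)
    then show "bilin M w t s (f + g) k = bilin M w t s f k + bilin M w t s g k"
      unfolding bl using Bochner_Integration.integral_add[OF IW IW] by simp
    have "(\<lambda>z. W z * (poly k z * poly (f + g) (inverse z))) =
          (\<lambda>z. W z * (poly k z * poly f (inverse z)) + W z * (poly k z * poly g (inverse z)))"
      by (rule ext) (simp add: algebra_simps)
    then show "bilin M w t s k (f + g) = bilin M w t s k f + bilin M w t s k g"
      unfolding bl using Bochner_Integration.integral_add[OF IW IW] by simp
  next
    fix c and f k :: "complex poly"
    have "(\<lambda>z. W z * (poly (Polynomial.smult c f) z * poly k (inverse z))) =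
          (\<lambda>z. c * (W z * (poly f z * poly k (inverse z))))"
      by (rule ext) (simp add: algebra_simps)
    then show "bilin M w t s (Polynomial.smult c f) k = c * bilin M w t s f k"
      unfolding bl by simp
    have "(\<lambda>z. W z * (poly k z * poly (Polynomial.smult c f) (inverse z))) =
          (\<lambda>z. c * (W z * (poly k z * poly f (inverse z))))"
      by (rule ext) (simp add: algebra_simps)
    then show "bilin M w t s k (Polynomial.smult c f) = c * bilin M w t s k f"
      unfolding bl by simp
  next
    fix f g f' g' :: "complex poly"
    assume H: "\<And>z. z \<noteq> 0 \<Longrightarrow> poly f z * poly g (inverse z) = poly f' z * poly g' (inverse z)"
    have "(\<lambda>z. W z * (poly f z * poly g (inverse z))) = (\<lambda>z. W z * (poly f' z * poly g' (inverse z)))"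
    proof (rule ext)
      fix z :: complex
      show "W z * (poly f z * poly g (inverse z)) = W z * (poly f' z * poly g' (inverse z))"
      proof (cases "z = 0")
        case True
        then have "W z = 0" unfolding W_def by (simp only: mult_zero_right division_ring_divide_zero mult_zero_left)
        then show ?thesis by simp
      qed (simp add: H)
    qed
    then show "bilin M w t s f g = bilin M w t s f' g'" unfolding bl by simp
  qed (auto simp: hnz p1_deg p1_monic p2_deg p2_monic orth c1 c2)
  interpret sw: bf "\<lambda>f g. bilin M w t s g f" p2 p1 ?h by (rule swap)
  have R1: "L1 n (Suc n) = 1 \<and> (\<forall>m. m \<ge> n + 2 \<longrightarrow> L1 n m = 0)
     \<and> (\<forall>m \<le> n. L1 n m = - ?h n * poly (p1 (Suc n)) 0 * inverse (?h m) * poly (p2 m) 0)" for n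
    by (rule Lresult[OF L1_fin L1_def])
  have R2: "M2 n (Suc n) = 1 \<and> (\<forall>m. m \<ge> n + 2 \<longrightarrow> M2 n m = 0)
     \<and> (\<forall>m \<le> n. M2 n m = - ?h n * poly (p2 (Suc n)) 0 * inverse (?h m) * poly (p1 m) 0)" for n
    by (rule sw.Lresult[OF M2_fin M2_def])
  show ?thesis
  proof (rule allI)
    fix n
    note a = R1[of n, THEN conjunct1] R1[of n, THEN conjunct2, THEN conjunct1]
      R1[of n, THEN conjunct2, THEN conjunct2]
    note b = R2[of n, THEN conjunct1] R2[of n, THEN conjunct2, THEN conjunct1]
      R2[of n, THEN conjunct2, THEN conjunct2]
    have c: "\<forall>m. m \<ge> n + 2 \<longrightarrow> L1 n m = 0 \<and> M2 n m = 0" using a(2) b(2) by blast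
    have d: "\<forall>m \<le> n. L1 n m = - ?h n * poly (p1 (Suc n)) 0 * inverse (?h m) * poly (p2 m) 0
              \<and> M2 n m = - ?h n * poly (p2 (Suc n)) 0 * inverse (?h m) * poly (p1 m) 0"
      using a(3) b(3) by blast
    show "L1 n (Suc n) = 1 \<and> M2 n (Suc n) = 1
           \<and> (\<forall>m. m \<ge> n + 2 \<longrightarrow> L1 n m = 0 \<and> M2 n m = 0)
           \<and> (\<forall>m \<le> n.
                L1 n m = - ?h n * poly (p1 (Suc n)) 0
                           * inverse (?h m) * poly (p2 m) 0
              \<and> M2 n m = - ?h n * poly (p2 (Suc n)) 0
                           * inverse (?h m) * poly (p1 m) 0)"
      using a(1) b(1) c d by (intro conjI)
  qed
qed

end
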